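(* Let $L$ be a free $\mathbb{Z}$-module of rank $2n$ with basis $e_1,\dots,e_n,x_1,\dots,x_n$. Let $\mathcal{K}$ be the set of pairs $(K,\kappa)$ where $K\subseteq\{1,\dots,n\}$ (possibly empty) and $\kappa\colon K\to\{1,\dots,n\}$ is an order-preserving injective map. For $(K,\kappa)\in\mathcal{K}$ put $v_{(K,\kappa)}:=v_1\wedge\dots\wedge v_n\in\Lambda^nL$, where $v_i=e_i$ if $i\notin K$ and $v_i=e_i+x_{\kappa(i)}$ if $i\in K$. Then $\{v_{(K,\kappa)}\}_{(K,\kappa)\in\mathcal{K}}$ is a basis of the $\mathbb{Z}$-module $\Lambda^nL$. *)

theory Defs
  imports "Jordan_Normal_Form.Determinant" "HOL-Library.FuncSet"
begin

text \<open>The free Z-module L of rank d is modelled as int vectors of dimension d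
(basis = unit vectors). The exterior power \<Lambda>^m L is modelled through its
standard basis e_S (S an m-subset of the index set {0..<d}): an element is an
integer-valued function on index sets S, supported on m-subsets of {0..<d}.\<close>

definition ext_power :: "nat \<Rightarrow> nat \<Rightarrow> (nat set \<Rightarrow> int) set" where
  "ext_power d m = {f. \<forall>S. f S \<noteq> 0 \<longrightarrow> S \<subseteq> {..<d} \<and> card S = m}"

text \<open>Wedge product v_1 \<and> ... \<and> v_m of a list of vectors of dimension d:
its coefficient at e_S is the m\<times>m minor on the columns S (in increasing order).\<close>

definition wedge :: "nat \<Rightarrow> int vec list \<Rightarrow> nat set \<Rightarrow> int" where
  "wedge d vs S =
     (if S \<subseteq> {..<d} \<and> card S = length vs
      then det (mat (length vs) (length vs)
                  (\<lambda>(i, k). vs ! i $ (sorted_list_of_set S ! k)))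
      else 0)"

definition is_Z_basis :: "'i set \<Rightarrow> ('i \<Rightarrow> 'b \<Rightarrow> int) \<Rightarrow> ('b \<Rightarrow> int) set \<Rightarrow> bool" where
  "is_Z_basis I b M \<longleftrightarrow>
     finite I \<and> (\<forall>i\<in>I. b i \<in> M) \<and>
     (\<forall>c :: 'i \<Rightarrow> int. (\<lambda>s. \<Sum>i\<in>I. c i * b i s) = (\<lambda>s. 0) \<longrightarrow> (\<forall>i\<in>I. c i = 0)) \<and>
     (\<forall>y\<in>M. \<exists>c :: 'i \<Rightarrow> int. y = (\<lambda>s. \<Sum>i\<in>I. c i * b i s))"

definition e_vec :: "nat \<Rightarrow> nat \<Rightarrow> int vec" where
  "e_vec n i = unit_vec (2 * n) (i - 1)"

definition x_vec :: "nat \<Rightarrow> nat \<Rightarrow> int vec" where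
  "x_vec n j = unit_vec (2 * n) (n + j - 1)"

definition Kset :: "nat \<Rightarrow> (nat set \<times> (nat \<Rightarrow> nat)) set" where
  "Kset n = {(K, \<kappa>). K \<subseteq> {1..n} \<and> \<kappa> \<in> K \<rightarrow>\<^sub>E {1..n} \<and> mono_on K \<kappa> \<and> inj_on \<kappa> K}"

definition v_vec :: "nat \<Rightarrow> nat set \<times> (nat \<Rightarrow> nat) \<Rightarrow> nat \<Rightarrow> int vec" where
  "v_vec n Kk i = (if i \<in> fst Kk then e_vec n i + x_vec n (snd Kk i) else e_vec n i)"

definition v_wedge :: "nat \<Rightarrow> nat set \<times> (nat \<Rightarrow> nat) \<Rightarrow> nat set \<Rightarrow> int" where
  "v_wedge n Kk = wedge (2 * n) (map (v_vec n Kk) [1..<n + 1])"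

end

theory Submission
  imports Defs "HOL-Library.Infinite_Set"
begin


lemma tri_basis:
  fixes b :: "'i \<Rightarrow> 'b \<Rightarrow> int" and phi :: "'i \<Rightarrow> 'b" and g :: "'b \<Rightarrow> nat"
  assumes fin: "finite I"
  and M: "M = {f. \<forall>S. f S \<noteq> 0 \<longrightarrow> S \<in> T}"
  and bM: "\<forall>i\<in>I. b i \<in> M"
  and bij: "bij_betw phi I T"
  and diag: "\<forall>i\<in>I. b i (phi i) = 1 \<or> b i (phi i) = -1"
  and tri: "\<forall>i\<in>I. \<forall>S. b i S \<noteq> 0 \<longrightarrow> S = phi i \<or> g S < g (phi i)"
  shows "is_Z_basis I b M"
  unfolding is_Z_basis_def
proof (intro conjI ballI allI impI)
  show "finite I" by fact
  show "\<And>i. i \<in> I \<Longrightarrow> b i \<in> M" using bM by blast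
  have inj: "inj_on phi I" and img: "phi ` I = T" using bij by (auto simp: bij_betw_def)
  have sq: "b i (phi i) * b i (phi i) = 1" if "i \<in> I" for i using diag that by auto
  {
    fix c :: "'i \<Rightarrow> int" and i
    assume z: "(\<lambda>s. \<Sum>i\<in>I. c i * b i s) = (\<lambda>s. 0)" and iI: "i \<in> I"
    show "c i = 0"
    proof (rule ccontr)
      assume ci: "c i \<noteq> 0"
      define A where "A = {j\<in>I. c j \<noteq> 0}"
      have finA: "finite A" using fin A_def by auto
      have iA: "i \<in> A" using ci iI A_def by auto
      define m where "m = Max ((g \<circ> phi) ` A)"
      have "m \<in> (g \<circ> phi) ` A" unfolding m_def using finA iA by (intro Max_in) auto
      then obtain i0 where i0A: "i0 \<in> A" and i0m: "g (phi i0) = m" by auto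
      have le: "g (phi j) \<le> m" if "j \<in> A" for j unfolding m_def using finA that by (intro Max_ge) auto
      have i0I: "i0 \<in> I" and ci0: "c i0 \<noteq> 0" using i0A A_def by auto
      have others: "c j * b j (phi i0) = 0" if "j \<in> I - {i0}" for j
      proof (rule ccontr)
        assume h: "c j * b j (phi i0) \<noteq> 0"
        then have jA: "j \<in> A" using that A_def by auto
        have "b j (phi i0) \<noteq> 0" using h by auto
        then have "phi i0 = phi j \<or> g (phi i0) < g (phi j)" using tri that by auto
        then show False
        proof
          assume "phi i0 = phi j" then have "i0 = j" using inj i0I that by (auto dest: inj_onD)
          then show False using that by auto
        next
          assume "g (phi i0) < g (phi j)" then show False using le[OF jA] i0m by auto
        qed
      qed
      have "0 = (\<Sum>j\<in>I. c j * b j (phi i0))" using fun_cong[OF z, of "phi i0"] by simp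
      also have "\<dots> = c i0 * b i0 (phi i0) + (\<Sum>j\<in>I - {i0}. c j * b j (phi i0))"
        using fin i0I by (simp add: sum.remove)
      also have "\<dots> = c i0 * b i0 (phi i0)" by (subst sum.neutral[of "I - {i0}"]) (use others in auto)
      finally have "c i0 * b i0 (phi i0) = 0" by simp
      then show False using ci0 diag i0I by auto
    qed
  }
  {
    fix y assume yM: "y \<in> M"
    have finT: "finite T" using img fin by auto
    have main: "\<forall>y\<in>M. (\<forall>S. y S \<noteq> 0 \<longrightarrow> g S < m) \<longrightarrow> (\<exists>c::'i\<Rightarrow>int. y = (\<lambda>s. \<Sum>i\<in>I. c i * b i s))" for m
    proof (induction m)
      case 0
      show ?case
      proof (intro ballI impI)
        fix y assume "y \<in> M" "\<forall>S. y S \<noteq> 0 \<longrightarrow> g S < 0"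
        then have "y = (\<lambda>s. 0)" by auto
        then show "\<exists>c::'i\<Rightarrow>int. y = (\<lambda>s. \<Sum>i\<in>I. c i * b i s)" by (intro exI[where x="\<lambda>_. 0"]) auto
      qed
    next
      case (Suc m)
      show ?case
      proof (intro ballI impI)
        fix y assume yM: "y \<in> M" and ys: "\<forall>S. y S \<noteq> 0 \<longrightarrow> g S < Suc m"
        define d where "d i = (if g (phi i) = m then y (phi i) * b i (phi i) else 0)" for i
        define y' where "y' s = y s - (\<Sum>i\<in>I. d i * b i s)" for s
        have y'0: "y' s = 0" if "\<not> (s \<in> T \<and> g s < m)" for s
        proof (cases "s \<in> T")
          case False
          then have "y s = 0" using yM M by auto
          moreover have "b i s = 0" if "i \<in> I" for i using bM that False M by auto
          ultimately show ?thesis unfolding y'_def by simp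
        next
          case True
          then have gs: "g s \<ge> m" using that by auto
          show ?thesis
          proof (cases "g s = m")
            case False
            then have "y s = 0" using ys gs by (metis le_antisym less_Suc_eq_le)
            moreover have dz: "d i * b i s = 0" if "i \<in> I" for i
            proof (cases "g (phi i) = m")
              case True
              have "b i s = 0"
              proof (rule ccontr)
                assume "b i s \<noteq> 0"
                then have "s = phi i \<or> g s < g (phi i)" using tri that by auto
                then show False using True False gs by auto
              qed
              then show ?thesis by simp
            qed (simp add: d_def)
            then have "(\<Sum>i\<in>I. d i * b i s) = 0" by (intro sum.neutral) blast
            ultimately show ?thesis unfolding y'_def by simp
          next
            case gm: True
            obtain k where kI: "k \<in> I" and sk: "s = phi k" using True img by auto
            have oth: "d i * b i s = 0" if "i \<in> I - {k}" for i
            proof (cases "g (phi i) = m")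
              case True
              have "b i s = 0"
              proof (rule ccontr)
                assume "b i s \<noteq> 0"
                then have "s = phi i \<or> g s < g (phi i)" using tri that by auto
                then show False
                proof
                  assume "s = phi i" then have "i = k" using inj kI that sk by (auto dest: inj_onD)
                  then show False using that by auto
                qed (use True gm in auto)
              qed
              then show ?thesis by simp
            qed (simp add: d_def)
            have "(\<Sum>i\<in>I. d i * b i s) = d k * b k s + (\<Sum>i\<in>I - {k}. d i * b i s)"
              using fin kI by (simp add: sum.remove)
            also have "\<dots> = d k * b k s" by (subst sum.neutral[of "I - {k}"]) (use oth in auto)
            also have "\<dots> = y s" using gm sk sq[OF kI] unfolding d_def by (simp add: mult.assoc)
            finally show ?thesis unfolding y'_def by simp
          qed
        qed
        have "y' \<in> M" using y'0 M by auto
        moreover have "\<forall>S. y' S \<noteq> 0 \<longrightarrow> g S < m" using y'0 by blast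
        ultimately obtain c where c: "y' = (\<lambda>s. \<Sum>i\<in>I. c i * b i s)" using Suc.IH by blast
        have "y = (\<lambda>s. \<Sum>i\<in>I. (c i + d i) * b i s)"
        proof
          fix s
          have "y s = y' s + (\<Sum>i\<in>I. d i * b i s)" unfolding y'_def by simp
          also have "\<dots> = (\<Sum>i\<in>I. (c i + d i) * b i s)" unfolding c
            by (simp add: distrib_right sum.distrib)
          finally show "y s = (\<Sum>i\<in>I. (c i + d i) * b i s)" .
        qed
        then show "\<exists>c::'i\<Rightarrow>int. y = (\<lambda>s. \<Sum>i\<in>I. c i * b i s)" by (intro exI[where x="\<lambda>i. c i + d i"])
      qed
    qed
    have "\<forall>S. y S \<noteq> 0 \<longrightarrow> g S < Suc (Max (g ` T))"
      using yM M finT by (auto simp: le_imp_less_Suc)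
    then show "\<exists>c::'i\<Rightarrow>int. y = (\<lambda>s. \<Sum>i\<in>I. c i * b i s)" using main yM by blast
  }
qed



definition cc :: "nat \<Rightarrow> (nat \<Rightarrow> nat) \<Rightarrow> nat \<Rightarrow> nat" where
  "cc n \<kappa> i = n + \<kappa> (Suc i) - 1"

lemma Kset_D:
  assumes "(K, \<kappa>) \<in> Kset n"
  shows "K \<subseteq> {1..n}" "\<And>i. i \<in> K \<Longrightarrow> \<kappa> i \<in> {1..n}" "\<And>i. i \<notin> K \<Longrightarrow> \<kappa> i = undefined"
    "mono_on K \<kappa>" "inj_on \<kappa> K"
  using assms unfolding Kset_def by (auto simp: PiE_def extensional_def)

lemma entry:
  assumes Kk: "(K, \<kappa>) \<in> Kset n" and S: "S \<subseteq> {..<2*n}" "card S = n" and i: "i < n" and k: "k < n"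
  shows "mat n n (\<lambda>(i,k). map (v_vec n (K,\<kappa>)) [1..<n+1] ! i $ (sorted_list_of_set S ! k)) $$ (i,k)
     = (if sorted_list_of_set S ! k = i \<or> (Suc i \<in> K \<and> sorted_list_of_set S ! k = cc n \<kappa> i) then 1 else 0)"
proof -
  let ?s = "sorted_list_of_set S"
  have finS: "finite S" using S by (meson finite_lessThan finite_subset)
  have "k < length ?s" using k S finS by (simp add: length_sorted_list_of_set)
  then have "?s ! k \<in> set ?s" by (rule nth_mem)
  then have sk: "?s ! k < 2 * n" using S finS by auto
  have ccge: "cc n \<kappa> i \<ge> n" if "Suc i \<in> K" using Kset_D(2)[OF Kk that] unfolding cc_def by auto
  have ccl: "cc n \<kappa> i < 2 * n" if "Suc i \<in> K" using Kset_D(2)[OF Kk that] unfolding cc_def by auto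
  have vi: "map (v_vec n (K,\<kappa>)) [1..<n+1] ! i = v_vec n (K,\<kappa>) (Suc i)" using i by (simp del: upt_Suc add: nth_map_upt)
  have "mat n n (\<lambda>(i,k). map (v_vec n (K,\<kappa>)) [1..<n+1] ! i $ (?s ! k)) $$ (i,k) = v_vec n (K,\<kappa>) (Suc i) $ (?s ! k)"
    using i k vi by (simp del: upt_Suc)
  also have "\<dots> = (if ?s ! k = i \<or> (Suc i \<in> K \<and> ?s ! k = cc n \<kappa> i) then 1 else 0)"
    using i k sk ccge ccl
    by (auto simp: v_vec_def e_vec_def x_vec_def cc_def index_unit_vec)
  finally show ?thesis .
qed

definition validp :: "nat \<Rightarrow> nat set \<Rightarrow> (nat \<Rightarrow> nat) \<Rightarrow> nat list \<Rightarrow> (nat \<Rightarrow> nat) \<Rightarrow> bool" where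
  "validp n K \<kappa> s p \<longleftrightarrow> (\<forall>i<n. s ! (p i) = i \<or> (Suc i \<in> K \<and> s ! (p i) = cc n \<kappa> i))"

lemma prod_indicator_like:
  assumes "finite A"
  shows "(\<Prod>i\<in>A. (if P i then 1 else 0 :: int)) = (if \<forall>i\<in>A. P i then 1 else 0)"
proof (cases "\<forall>i\<in>A. P i")
  case True then show ?thesis by simp
next
  case False
  then obtain i where "i \<in> A" "\<not> P i" by auto
  then show ?thesis using assms False by (intro trans[OF prod_zero]) auto
qed

lemma wedge_eq:
  assumes Kk: "(K, \<kappa>) \<in> Kset n" and S: "S \<subseteq> {..<2*n}" "card S = n"
  shows "v_wedge n (K,\<kappa>) S = (\<Sum>p\<in>{p. p permutes {0..<n} \<and> validp n K \<kappa> (sorted_list_of_set S) p}. signof p)"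
proof -
  let ?s = "sorted_list_of_set S"
  let ?A = "mat n n (\<lambda>(i,k). map (v_vec n (K,\<kappa>)) [1..<n+1] ! i $ (?s ! k))"
  have len: "length (map (v_vec n (K,\<kappa>)) [1..<n+1]) = n" by simp
  have "v_wedge n (K,\<kappa>) S = det ?A"
    unfolding v_wedge_def wedge_def len using S by simp
  also have "\<dots> = (\<Sum>p\<in>{p. p permutes {0..<n}}. signof p * (\<Prod>i = 0..<n. ?A $$ (i, p i)))"
    by (rule det_def') simp
  also have "\<dots> = (\<Sum>p\<in>{p. p permutes {0..<n}}. (if validp n K \<kappa> ?s p then signof p else 0))"
  proof (rule sum.cong[OF refl])
    fix p assume "p \<in> {p. p permutes {0..<n}}"
    then have pp: "p permutes {0..<n}" by simp
    have pi: "p i < n" if "i < n" for i using pp that permutes_in_image by fastforce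
    have "(\<Prod>i = 0..<n. ?A $$ (i, p i)) = (\<Prod>i = 0..<n. (if ?s ! (p i) = i \<or> (Suc i \<in> K \<and> ?s ! (p i) = cc n \<kappa> i) then 1 else 0))"
      by (rule prod.cong[OF refl]) (use entry[OF Kk S] pi in auto)
    also have "\<dots> = (if validp n K \<kappa> ?s p then 1 else 0)"
      by (subst prod_indicator_like) (auto simp: validp_def)
    finally show "signof p * (\<Prod>i = 0..<n. ?A $$ (i, p i)) = (if validp n K \<kappa> ?s p then signof p else 0)"
      by simp
  qed
  also have "\<dots> = (\<Sum>p\<in>{p. p permutes {0..<n} \<and> validp n K \<kappa> ?s p}. signof p)"
  proof -
    have fin: "finite {p. p permutes {0..<n}}" by (simp add: finite_permutations)
    have "{p. p permutes {0..<n} \<and> validp n K \<kappa> ?s p} = {p \<in> {p. p permutes {0..<n}}. validp n K \<kappa> ?s p}" by auto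
    then show ?thesis using sum.inter_filter[OF fin, of "signof :: (nat \<Rightarrow> nat) \<Rightarrow> int" "validp n K \<kappa> ?s"] by simp
  qed
  finally show ?thesis .
qed

lemma sl_facts:
  assumes S: "S \<subseteq> {..<2*n}" "card S = n"
  shows "finite S" "length (sorted_list_of_set S) = n" "distinct (sorted_list_of_set S)"
    "set (sorted_list_of_set S) = S"
proof -
  show fS: "finite S" using S by (meson finite_lessThan finite_subset)
  then show "length (sorted_list_of_set S) = n" using S by simp
  show "distinct (sorted_list_of_set S)" by simp
  show "set (sorted_list_of_set S) = S" using fS by simp
qed

lemma f_bij:
  assumes p: "p permutes {0..<n}" and d: "distinct s" "length s = n"
  shows "bij_betw (\<lambda>i. s ! (p i)) {0..<n} (set s)"
proof -
  have "bij_betw p {0..<n} {0..<n}" using p by (rule permutes_imp_bij)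
  moreover have "bij_betw ((!) s) {0..<n} (set s)" using d by (intro bij_betw_nth) auto
  ultimately have "bij_betw ((!) s \<circ> p) {0..<n} (set s)" by (rule bij_betw_trans)
  then show ?thesis by (simp add: comp_def)
qed

lemma cc_ge:
  assumes Kk: "(K, \<kappa>) \<in> Kset n" and "Suc i \<in> K"
  shows "n \<le> cc n \<kappa> i" "cc n \<kappa> i < 2 * n"
  using Kset_D(2)[OF Kk assms(2)] unfolding cc_def by auto

lemma valid_fix:
  assumes Kk: "(K, \<kappa>) \<in> Kset n" and S: "S \<subseteq> {..<2*n}" "card S = n"
    and p: "p permutes {0..<n}" and v: "validp n K \<kappa> (sorted_list_of_set S) p"
    and i: "i < n"
  shows "sorted_list_of_set S ! (p i) = (if i \<in> S then i else cc n \<kappa> i)"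
proof -
  let ?s = "sorted_list_of_set S"
  let ?f = "\<lambda>i. ?s ! (p i)"
  have bij: "bij_betw ?f {0..<n} S" using f_bij[OF p sl_facts(3,2)[OF S]] sl_facts(4)[OF S] by simp
  show ?thesis
  proof (cases "i \<in> S")
    case True
    then obtain r where r: "r < n" "?f r = i" using bij unfolding bij_betw_def by force
    have "r = i"
    proof (rule ccontr)
      assume "r \<noteq> i"
      then have "Suc r \<in> K \<and> ?f r = cc n \<kappa> r" using v r unfolding validp_def by metis
      then show False using cc_ge[OF Kk] r i by fastforce
    qed
    then show ?thesis using r True by simp
  next
    case False
    have "?f i \<in> S" using bij i unfolding bij_betw_def by auto
    then have "?f i \<noteq> i" using False by auto
    then show ?thesis using v i False unfolding validp_def by auto
  qed
qed

lemma valid_unique: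
  assumes Kk: "(K, \<kappa>) \<in> Kset n" and S: "S \<subseteq> {..<2*n}" "card S = n"
    and p: "p permutes {0..<n}" and vp: "validp n K \<kappa> (sorted_list_of_set S) p"
    and q: "q permutes {0..<n}" and vq: "validp n K \<kappa> (sorted_list_of_set S) q"
  shows "p = q"
proof
  fix i
  show "p i = q i"
  proof (cases "i < n")
    case True
    let ?s = "sorted_list_of_set S"
    have "?s ! (p i) = ?s ! (q i)" using valid_fix[OF Kk S p vp True] valid_fix[OF Kk S q vq True] by simp
    moreover have "p i < n" "q i < n" using p q True permutes_in_image by fastforce+
    ultimately show ?thesis using sl_facts[OF S] nth_eq_iff_index_eq by metis
  next
    case False
    then show ?thesis using p q by (simp add: permutes_def)
  qed
qed

lemma smono_sorted:
  fixes f :: "nat \<Rightarrow> nat"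
  assumes K: "finite K" and f: "strict_mono_on K f"
  shows "sorted_list_of_set (f ` K) = map f (sorted_list_of_set K)"
proof -
  let ?ks = "sorted_list_of_set K"
  have s1: "sorted_wrt (<) ?ks" by simp
  have "sorted_wrt (\<lambda>x y. f x < f y) ?ks"
    by (rule sorted_wrt_mono_rel[OF _ s1]) (use f K in \<open>auto simp: strict_mono_on_def\<close>)
  then have "sorted_wrt (<) (map f ?ks)" by (simp add: sorted_wrt_map)
  moreover have "set (map f ?ks) = f ` K" using K by simp
  moreover have "length (map f ?ks) = card (f ` K)"
    using K strict_mono_on_imp_inj_on[OF f] by (simp add: card_image)
  ultimately show ?thesis using K by (subst sorted_list_of_set_unique[symmetric]) auto
qed

lemma smono_unique:
  fixes f g :: "nat \<Rightarrow> nat"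
  assumes K: "finite K" and f: "strict_mono_on K f" and g: "strict_mono_on K g"
    and im: "f ` K = g ` K" and x: "x \<in> K"
  shows "f x = g x"
proof -
  have "map f (sorted_list_of_set K) = map g (sorted_list_of_set K)"
    using smono_sorted[OF K f] smono_sorted[OF K g] im by simp
  then show ?thesis using x K by (simp add: map_eq_conv)
qed

lemma smono_exists:
  fixes K B :: "nat set"
  assumes K: "finite K" and B: "finite B" and c: "card K = card B"
  obtains f where "strict_mono_on K f" "f ` K = B"
proof -
  obtain hK where hK: "bij_betw hK {..<card K} K" "strict_mono_on {..<card K} hK"
    using ex_bij_betw_strict_mono_card[OF K] by blast
  obtain hB where hB: "bij_betw hB {..<card K} B" "strict_mono_on {..<card K} hB"
    using ex_bij_betw_strict_mono_card[OF B] c by metis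
  define iK where "iK = the_inv_into {..<card K} hK"
  have iK: "bij_betw iK K {..<card K}" unfolding iK_def by (rule bij_betw_the_inv_into[OF hK(1)])
  have hiK: "hK (iK x) = x" if "x \<in> K" for x
    unfolding iK_def using hK(1) that by (meson bij_betw_def f_the_inv_into_f_bij_betw)
  show ?thesis
  proof
    show "strict_mono_on K (hB \<circ> iK)"
    proof (rule strict_mono_onI)
      fix x y assume xy: "x \<in> K" "y \<in> K" "x < y"
      have a: "iK x \<in> {..<card K}" "iK y \<in> {..<card K}" using iK xy by (auto simp: bij_betw_def)
      have "iK x < iK y"
      proof (rule ccontr)
        assume "\<not> iK x < iK y"
        then have "iK y \<le> iK x" by simp
        then have "hK (iK y) \<le> hK (iK x)"
          using strict_mono_on_imp_mono_on[OF hK(2)] a by (auto simp: mono_on_def)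
        then show False using hiK xy by auto
      qed
      then show "(hB \<circ> iK) x < (hB \<circ> iK) y" using hB(2) a by (auto simp: strict_mono_on_def)
    qed
    show "(hB \<circ> iK) ` K = B" using iK hB(1) by (metis bij_betw_def image_comp)
  qed
qed

definition Kp :: "nat \<Rightarrow> nat set \<Rightarrow> nat set" where
  "Kp n K = {i. i < n \<and> Suc i \<in> K}"

definition phiK :: "nat \<Rightarrow> nat set \<times> (nat \<Rightarrow> nat) \<Rightarrow> nat set" where
  "phiK n Kk = {i. i < n \<and> Suc i \<notin> fst Kk} \<union> cc n (snd Kk) ` Kp n (fst Kk)"

definition gS :: "nat \<Rightarrow> nat set \<Rightarrow> nat" where
  "gS n S = card {j\<in>S. n \<le> j}"

lemma Kp_image: assumes "K \<subseteq> {1..n}" shows "Suc ` Kp n K = K"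
proof
  show "Suc ` Kp n K \<subseteq> K" unfolding Kp_def by auto
  show "K \<subseteq> Suc ` Kp n K"
  proof
    fix k assume k: "k \<in> K"
    then have "k \<in> {1..n}" using assms by auto
    then have "k = Suc (k - 1)" "k - 1 < n" by auto
    then show "k \<in> Suc ` Kp n K" unfolding Kp_def using k by (metis (mono_tags, lifting) image_eqI mem_Collect_eq)
  qed
qed

lemma Kp_card: assumes "K \<subseteq> {1..n}" shows "card (Kp n K) = card K"
  using Kp_image[OF assms] by (metis card_image inj_Suc inj_on_subset subset_UNIV)

lemma cc_inj: assumes Kk: "(K, \<kappa>) \<in> Kset n" shows "inj_on (cc n \<kappa>) (Kp n K)"
proof (rule inj_onI)
  fix i j assume ij: "i \<in> Kp n K" "j \<in> Kp n K" "cc n \<kappa> i = cc n \<kappa> j"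
  then have "Suc i \<in> K" "Suc j \<in> K" unfolding Kp_def by auto
  then have "\<kappa> (Suc i) \<ge> 1" "\<kappa> (Suc j) \<ge> 1" using Kset_D(2)[OF Kk] by auto
  then have "\<kappa> (Suc i) = \<kappa> (Suc j)" using ij(3) unfolding cc_def by auto
  then have "Suc i = Suc j" using Kset_D(5)[OF Kk] \<open>Suc i \<in> K\<close> \<open>Suc j \<in> K\<close> by (meson inj_onD)
  then show "i = j" by simp
qed

lemma valid_struct:
  assumes Kk: "(K, \<kappa>) \<in> Kset n" and S: "S \<subseteq> {..<2*n}" "card S = n"
    and p: "p permutes {0..<n}" and v: "validp n K \<kappa> (sorted_list_of_set S) p"
  shows "gS n S \<le> card K" "gS n S = card K \<Longrightarrow> S = phiK n (K, \<kappa>)"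
proof -
  let ?s = "sorted_list_of_set S"
  let ?f = "\<lambda>i. ?s ! (p i)"
  have bij: "bij_betw ?f {0..<n} S" using f_bij[OF p sl_facts(3,2)[OF S]] sl_facts(4)[OF S] by simp
  define J where "J = {i. i < n \<and> i \<notin> S}"
  have JK: "J \<subseteq> Kp n K"
  proof
    fix i assume "i \<in> J"
    then have i: "i < n" "i \<notin> S" unfolding J_def by auto
    then have "?f i = cc n \<kappa> i" using valid_fix[OF Kk S p v] by simp
    moreover have "?f i \<noteq> i" using i bij unfolding bij_betw_def by (metis atLeastLessThan_iff image_eqI zero_le)
    ultimately have "Suc i \<in> K" using v i unfolding validp_def by auto
    then show "i \<in> Kp n K" using i unfolding Kp_def by auto
  qed
  have finKp: "finite (Kp n K)" unfolding Kp_def by auto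
  have Sdec: "S = {i. i < n \<and> i \<in> S} \<union> cc n \<kappa> ` J"
  proof
    show "S \<subseteq> {i. i < n \<and> i \<in> S} \<union> cc n \<kappa> ` J"
    proof
      fix j assume "j \<in> S"
      then obtain i where i: "i < n" "j = ?f i" using bij unfolding bij_betw_def by force
      show "j \<in> {i. i < n \<and> i \<in> S} \<union> cc n \<kappa> ` J"
      proof (cases "i \<in> S")
        case True then show ?thesis using i valid_fix[OF Kk S p v i(1)] by simp
      next
        case False then show ?thesis using i valid_fix[OF Kk S p v i(1)] J_def by auto
      qed
    qed
    show "{i. i < n \<and> i \<in> S} \<union> cc n \<kappa> ` J \<subseteq> S"
    proof -
      have "cc n \<kappa> i \<in> S" if "i \<in> J" for i
      proof -
        have "?f i \<in> S" using bij that J_def unfolding bij_betw_def by auto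
        then show ?thesis using valid_fix[OF Kk S p v] that J_def by auto
      qed
      then show ?thesis by auto
    qed
  qed
  have ccJ: "n \<le> cc n \<kappa> i" if "i \<in> J" for i using JK that cc_ge(1)[OF Kk] unfolding Kp_def by auto
  have upper: "{j\<in>S. n \<le> j} = cc n \<kappa> ` J"
  proof -
    have "{j\<in>S. n \<le> j} = {j \<in> {i. i < n \<and> i \<in> S} \<union> cc n \<kappa> ` J. n \<le> j}" using Sdec by simp
    also have "\<dots> = cc n \<kappa> ` J" using ccJ by auto
    finally show ?thesis .
  qed
  have gJ: "gS n S = card J"
    unfolding gS_def upper using inj_on_subset[OF cc_inj[OF Kk] JK] by (simp add: card_image)
  show "gS n S \<le> card K" unfolding gJ Kp_card[OF Kset_D(1)[OF Kk], symmetric]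
    using card_mono[OF finKp JK] .
  assume eq: "gS n S = card K"
  then have "card J = card (Kp n K)" unfolding gJ Kp_card[OF Kset_D(1)[OF Kk]] .
  then have JKp: "J = Kp n K" using card_subset_eq[OF finKp JK] by simp
  have "{i. i < n \<and> i \<in> S} = {i. i < n \<and> Suc i \<notin> K}"
  proof -
    have "i \<in> S \<longleftrightarrow> Suc i \<notin> K" if "i < n" for i
      using that JKp unfolding J_def Kp_def by blast
    then show ?thesis by auto
  qed
  then show "S = phiK n (K, \<kappa>)" using Sdec JKp unfolding phiK_def by simp
qed

lemma phi_props:
  assumes Kk: "(K, \<kappa>) \<in> Kset n"
  shows "phiK n (K, \<kappa>) \<subseteq> {..<2*n}" "card (phiK n (K, \<kappa>)) = n"
    "\<exists>p. p permutes {0..<n} \<and> validp n K \<kappa> (sorted_list_of_set (phiK n (K, \<kappa>))) p"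
proof -
  let ?P = "phiK n (K, \<kappa>)"
  define f where "f i = (if Suc i \<in> K then cc n \<kappa> i else i)" for i
  have inj: "inj_on f {0..<n}"
  proof (rule inj_onI)
    fix i j assume ij: "i \<in> {0..<n}" "j \<in> {0..<n}" "f i = f j"
    show "i = j"
    proof (cases "Suc i \<in> K"; cases "Suc j \<in> K")
      assume "Suc i \<in> K" "Suc j \<in> K"
      then show ?thesis using ij cc_inj[OF Kk] unfolding f_def Kp_def by (auto dest: inj_onD)
    next
      assume "Suc i \<in> K" "Suc j \<notin> K"
      then show ?thesis using ij cc_ge(1)[OF Kk, of i] unfolding f_def by auto
    next
      assume "Suc i \<notin> K" "Suc j \<in> K"
      then show ?thesis using ij cc_ge(1)[OF Kk, of j] unfolding f_def by auto
    next
      assume "Suc i \<notin> K" "Suc j \<notin> K"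
      then show ?thesis using ij unfolding f_def by auto
    qed
  qed
  have img: "f ` {0..<n} = ?P"
    unfolding phiK_def Kp_def f_def by (auto simp: image_iff)
  have bij: "bij_betw f {0..<n} ?P" using inj img by (simp add: bij_betw_def)
  show "card ?P = n" using bij_betw_same_card[OF bij] by simp
  show sub: "?P \<subseteq> {..<2*n}" using cc_ge(2)[OF Kk] unfolding phiK_def Kp_def by auto
  let ?s = "sorted_list_of_set ?P"
  have sf: "length ?s = n" "distinct ?s" "set ?s = ?P" using sl_facts[OF sub \<open>card ?P = n\<close>] by auto
  define p where "p i = (if i < n then inv_into {0..<n} ((!) ?s) (f i) else i)" for i
  have fP: "f i \<in> ?P" if "i < n" for i using img that by auto
  have simg: "((!) ?s) ` {0..<n} = ?P" using bij_betw_nth[of ?s "{..<length ?s}" "set ?s"] sf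
    by (simp add: bij_betw_def lessThan_atLeast0)
  have sp: "?s ! (p i) = f i" if "i < n" for i using that fP[OF that] simg unfolding p_def
    by (simp add: f_inv_into_f)
  have pl: "p i < n" if "i < n" for i using that fP[OF that] simg inv_into_into[of "f i" "(!) ?s" "{0..<n}"]
    unfolding p_def by simp
  have pinj: "inj_on p {0..<n}"
  proof (rule inj_onI)
    fix i j assume "i \<in> {0..<n}" "j \<in> {0..<n}" "p i = p j"
    then have "f i = f j" using sp by (metis atLeastLessThan_iff)
    then show "i = j" using inj \<open>i \<in> {0..<n}\<close> \<open>j \<in> {0..<n}\<close> by (auto dest: inj_onD)
  qed
  have "p ` {0..<n} = {0..<n}"
    by (rule endo_inj_surj) (use pl pinj in auto)
  then have "bij_betw p {0..<n} {0..<n}" using pinj by (simp add: bij_betw_def)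
  then have "p permutes {0..<n}" by (rule bij_imp_permutes) (simp add: p_def)
  moreover have "validp n K \<kappa> ?s p" unfolding validp_def using sp f_def by auto
  ultimately show "\<exists>p. p permutes {0..<n} \<and> validp n K \<kappa> ?s p" by blast
qed

lemma phi_low:
  assumes Kk: "(K, \<kappa>) \<in> Kset n" and i: "i < n"
  shows "i \<in> phiK n (K, \<kappa>) \<longleftrightarrow> Suc i \<notin> K"
  using cc_ge(1)[OF Kk] i unfolding phiK_def Kp_def by fastforce

lemma phi_high:
  assumes Kk: "(K, \<kappa>) \<in> Kset n"
  shows "(\<lambda>j. j + 1 - n) ` {j \<in> phiK n (K, \<kappa>). n \<le> j} = \<kappa> ` K"
proof -
  have "{j \<in> phiK n (K, \<kappa>). n \<le> j} = cc n \<kappa> ` Kp n K"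
    using cc_ge(1)[OF Kk] unfolding phiK_def Kp_def by fastforce
  also have "\<dots> = (\<lambda>k. n + \<kappa> k - 1) ` K"
    using Kp_image[OF Kset_D(1)[OF Kk]] unfolding cc_def by (metis (no_types, lifting) image_cong image_image)
  finally have "(\<lambda>j. j + 1 - n) ` {j \<in> phiK n (K, \<kappa>). n \<le> j} = (\<lambda>j. j + 1 - n) ` (\<lambda>k. n + \<kappa> k - 1) ` K"
    by simp
  also have "\<dots> = \<kappa> ` K"
    unfolding image_image by (rule image_cong[OF refl]) (use Kset_D(2)[OF Kk] in fastforce)
  finally show ?thesis .
qed

lemma smono_of: "mono_on K (\<kappa>::nat\<Rightarrow>nat) \<Longrightarrow> inj_on \<kappa> K \<Longrightarrow> strict_mono_on K \<kappa>"
  unfolding strict_mono_on_def mono_on_def inj_on_def by (metis order_less_le)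

lemma phi_inj: "inj_on (phiK n) (Kset n)"
proof (rule inj_onI)
  fix a b assume a: "a \<in> Kset n" and b: "b \<in> Kset n" and e: "phiK n a = phiK n b"
  obtain K1 \<kappa>1 where a': "a = (K1, \<kappa>1)" by (cases a)
  obtain K2 \<kappa>2 where b': "b = (K2, \<kappa>2)" by (cases b)
  have A: "(K1, \<kappa>1) \<in> Kset n" and B: "(K2, \<kappa>2) \<in> Kset n" using a b a' b' by auto
  have e': "phiK n (K1, \<kappa>1) = phiK n (K2, \<kappa>2)" using e a' b' by simp
  have KK: "K1 = K2"
  proof -
    have "k \<in> K1 \<longleftrightarrow> k \<in> K2" for k
    proof (cases "1 \<le> k \<and> k \<le> n")
      case True
      then have "k = Suc (k - 1)" "k - 1 < n" by auto
      then show ?thesis using phi_low[OF A, of "k - 1"] phi_low[OF B, of "k - 1"] e' by metis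
    next
      case False then show ?thesis using Kset_D(1)[OF A] Kset_D(1)[OF B] by auto
    qed
    then show ?thesis by auto
  qed
  have im: "\<kappa>1 ` K1 = \<kappa>2 ` K1" using phi_high[OF A] phi_high[OF B] e' KK by simp
  have finK: "finite K1" using Kset_D(1)[OF A] by (meson finite_atLeastAtMost finite_subset)
  have "\<kappa>1 x = \<kappa>2 x" for x
  proof (cases "x \<in> K1")
    case True
    show ?thesis
      by (rule smono_unique[OF finK smono_of[OF Kset_D(4,5)[OF A]] smono_of[OF Kset_D(4,5)[OF B, folded KK]] im True])
  next
    case False then show ?thesis using Kset_D(3)[OF A] Kset_D(3)[OF B] KK by metis
  qed
  then show "a = b" using a' b' KK by auto
qed

lemma phi_surj:
  assumes S: "S \<subseteq> {..<2*n}" "card S = n"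
  shows "S \<in> phiK n ` Kset n"
proof -
  have finS: "finite S" using sl_facts[OF S] by simp
  define K where "K = {k. 1 \<le> k \<and> k \<le> n \<and> k - 1 \<notin> S}"
  define H where "H = {j \<in> S. n \<le> j}"
  define B where "B = (\<lambda>j. j + 1 - n) ` H"
  have KS: "K = Suc ` ({0..<n} - S)"
  proof
    show "K \<subseteq> Suc ` ({0..<n} - S)"
    proof
      fix k assume "k \<in> K"
      then have "k = Suc (k - 1)" "k - 1 \<in> {0..<n} - S" unfolding K_def by auto
      then show "k \<in> Suc ` ({0..<n} - S)" by (metis imageI)
    qed
    show "Suc ` ({0..<n} - S) \<subseteq> K" unfolding K_def by auto
  qed
  have cK: "card K = n - card (S \<inter> {0..<n})"
    unfolding KS by (simp add: card_image card_Diff_subset_Int Int_commute)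
  have injH: "inj_on (\<lambda>j. j + 1 - n) H" unfolding H_def by (rule inj_onI) auto
  have SH: "S = (S \<inter> {0..<n}) \<union> H" "(S \<inter> {0..<n}) \<inter> H = {}" unfolding H_def by auto
  have "card S = card (S \<inter> {0..<n}) + card H"
    using finS SH by (metis card_Un_disjoint finite_Int finite_Un)
  then have cB: "card B = n - card (S \<inter> {0..<n})" unfolding B_def using injH S(2) by (simp add: card_image)
  have finK: "finite K" unfolding K_def by auto
  have finB: "finite B" unfolding B_def H_def using finS by auto
  obtain f where f: "strict_mono_on K f" "f ` K = B" using smono_exists[OF finK finB] cK cB by metis
  define \<kappa> where "\<kappa> = restrict f K"
  have Bn: "B \<subseteq> {1..n}" unfolding B_def H_def using S(1) by fastforce
  have Kk: "(K, \<kappa>) \<in> Kset n"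
    unfolding Kset_def
  proof (clarsimp, intro conjI)
    show "K \<subseteq> {Suc 0..n}" unfolding K_def by auto
    show "\<kappa> \<in> K \<rightarrow>\<^sub>E {Suc 0..n}" unfolding \<kappa>_def using f(2) Bn by auto
    show "mono_on K \<kappa>" unfolding \<kappa>_def using strict_mono_on_imp_mono_on[OF f(1)]
      by (simp add: mono_on_def)
    show "inj_on \<kappa> K" unfolding \<kappa>_def using strict_mono_on_imp_inj_on[OF f(1)]
      by (simp add: inj_on_def)
  qed
  have "phiK n (K, \<kappa>) = S"
  proof -
    have low: "{i. i < n \<and> Suc i \<notin> K} = S \<inter> {0..<n}" unfolding K_def by auto
    have "cc n \<kappa> ` Kp n K = (\<lambda>k. n + \<kappa> k - 1) ` K"
      using Kp_image[OF Kset_D(1)[OF Kk]] unfolding cc_def by (metis (no_types, lifting) image_cong image_image)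
    also have "\<dots> = (\<lambda>b. n + b - 1) ` (f ` K)" unfolding \<kappa>_def image_image by (rule image_cong) auto
    also have "\<dots> = (\<lambda>b. n + b - 1) ` B" using f(2) by simp
    also have "\<dots> = H" unfolding B_def image_image H_def by (rule trans[OF image_cong[OF refl]]) auto
    finally have "cc n \<kappa> ` Kp n K = H" .
    then show ?thesis unfolding phiK_def using low SH(1) by simp
  qed
  then show ?thesis using Kk by (metis imageI)
qed

lemma phi_bij: "bij_betw (phiK n) (Kset n) {S. S \<subseteq> {..<2*n} \<and> card S = n}"
  unfolding bij_betw_def
proof (intro conjI phi_inj)
  show "phiK n ` Kset n = {S. S \<subseteq> {..<2*n} \<and> card S = n}"
  proof
    show "phiK n ` Kset n \<subseteq> {S. S \<subseteq> {..<2*n} \<and> card S = n}"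
      using phi_props(1,2) by (force)
    show "{S. S \<subseteq> {..<2*n} \<and> card S = n} \<subseteq> phiK n ` Kset n" using phi_surj by blast
  qed
qed

lemma g_phi:
  assumes Kk: "(K, \<kappa>) \<in> Kset n"
  shows "gS n (phiK n (K, \<kappa>)) = card K"
proof -
  have "{j \<in> phiK n (K, \<kappa>). n \<le> j} = cc n \<kappa> ` Kp n K"
    using cc_ge(1)[OF Kk] unfolding phiK_def Kp_def by fastforce
  then show ?thesis unfolding gS_def using cc_inj[OF Kk] Kp_card[OF Kset_D(1)[OF Kk]]
    by (simp add: card_image)
qed

lemma wedge_supp:
  assumes "v_wedge n Kk S \<noteq> 0" shows "S \<subseteq> {..<2*n} \<and> card S = n"
  using assms unfolding v_wedge_def wedge_def by (auto split: if_splits)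

lemma wedge_diag:
  assumes Kk: "(K, \<kappa>) \<in> Kset n"
  shows "v_wedge n (K, \<kappa>) (phiK n (K, \<kappa>)) = 1 \<or> v_wedge n (K, \<kappa>) (phiK n (K, \<kappa>)) = -1"
proof -
  let ?P = "phiK n (K, \<kappa>)"
  have S: "?P \<subseteq> {..<2*n}" "card ?P = n" using phi_props(1,2)[OF Kk] by auto
  obtain p0 where p0: "p0 permutes {0..<n}" "validp n K \<kappa> (sorted_list_of_set ?P) p0"
    using phi_props(3)[OF Kk] by blast
  have "{p. p permutes {0..<n} \<and> validp n K \<kappa> (sorted_list_of_set ?P) p} = {p0}"
    using valid_unique[OF Kk S _ _ p0] p0 by blast
  then have "v_wedge n (K, \<kappa>) ?P = signof p0" using wedge_eq[OF Kk S] by simp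
  moreover have "(signof p0 :: int) \<in> {1, -1}" by (rule signof_pm_one)
  ultimately show ?thesis by auto
qed

lemma wedge_tri:
  assumes Kk: "(K, \<kappa>) \<in> Kset n" and nz: "v_wedge n (K, \<kappa>) S \<noteq> 0"
  shows "S = phiK n (K, \<kappa>) \<or> gS n S < gS n (phiK n (K, \<kappa>))"
proof -
  have S: "S \<subseteq> {..<2*n}" "card S = n" using wedge_supp[OF nz] by auto
  have "{p. p permutes {0..<n} \<and> validp n K \<kappa> (sorted_list_of_set S) p} \<noteq> {}"
    using nz wedge_eq[OF Kk S] by (metis sum.empty)
  then obtain p where p: "p permutes {0..<n}" "validp n K \<kappa> (sorted_list_of_set S) p" by blast
  show ?thesis using valid_struct[OF Kk S p] g_phi[OF Kk] by (cases "gS n S = card K") auto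
qed

theorem lemma1:
  fixes n :: nat
  shows "is_Z_basis (Kset n) (v_wedge n) (ext_power (2 * n) n)"
proof (rule tri_basis[where T = "{S. S \<subseteq> {..<2*n} \<and> card S = n}" and phi = "phiK n" and g = "gS n"])
  have "finite {S. S \<subseteq> {..<2*n} \<and> card S = n}"
    by (rule finite_subset[of _ "Pow {..<2*n}"]) auto
  then show "finite (Kset n)" using bij_betw_finite[OF phi_bij] by blast
  show "ext_power (2 * n) n = {f. \<forall>S. f S \<noteq> 0 \<longrightarrow> S \<in> {S. S \<subseteq> {..<2 * n} \<and> card S = n}}"
    unfolding ext_power_def by auto
  show "\<forall>i\<in>Kset n. v_wedge n i \<in> ext_power (2 * n) n"
    unfolding ext_power_def using wedge_supp by blast
  show "bij_betw (phiK n) (Kset n) {S. S \<subseteq> {..<2 * n} \<and> card S = n}" by (rule phi_bij)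
  show "\<forall>i\<in>Kset n. v_wedge n i (phiK n i) = 1 \<or> v_wedge n i (phiK n i) = - 1"
    using wedge_diag by fast
  show "\<forall>i\<in>Kset n. \<forall>S. v_wedge n i S \<noteq> 0 \<longrightarrow> S = phiK n i \<or> gS n S < gS n (phiK n i)"
    using wedge_tri by fast
qed

end
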